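(* With the mesh, coefficients $a^{(n)}_{n-k}$ and DCC kernels $p^{(n)}_{n-k}$ as in the context (in particular $\tau_{n-1}\le\tau_n$ for $2\le n\le N$), the DCC kernels are positive definite: for every $1\le n\le N$ and every real sequence $w_1,\dots,w_n$, $$\sum_{k=1}^n w_k\sum_{j=1}^k p^{(k)}_{k-j}w_j\ge 0 .$$
   Context: Fix $T>0$, $0<\alpha<1$ and a mesh $0=t_0<t_1<\dots<t_N=T$ with step sizes $\tau_n=t_n-t_{n-1}$ satisfying $\tau_{n-1}\le\tau_n$ for $2\le n\le N$. Set $t_{-1/2}=t_0$, $t_{n-1/2}=t_{n-1}+\tau_n/2$ for $1\le n\le N$, $\tau_{1/2}=\tau_1/2$ and $\tau_{n-1/2}=(\tau_n+\tau_{n-1})/2$ for $n\ge 2$. Let $\omega_\gamma(t)=t^{\gamma-1}/\Gamma(\gamma)$ for $t>0$. For $1\le n\le N$ and $1\le k\le n$ define $$a^{(n)}_{n-k}=\frac{1}{\tau_{k-1/2}}\int_{t_{k-3/2}}^{t_{k-1/2}}\omega_{1-\alpha}(t_{n-1/2}-s)\,ds .$$ The discrete complementary convolution (DCC) kernels are defined by $p^{(n)}_0=1/a^{(n)}_0$ and $p^{(n)}_{n-k}=\frac{1}{a^{(k)}_0}\sum_{j=k+1}^n\big(a^{(j)}_{j-k-1}-a^{(j)}_{j-k}\big)p^{(n)}_{n-j}$ for $1\le k\le n-1$; equivalently $\sum_{j=k}^n p^{(n)}_{n-j}a^{(j)}_{j-k}=1$ for all $1\le k\le n$. *)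

theory Defs
  imports "HOL-Analysis.Analysis"
begin

definition tau :: "(nat \<Rightarrow> real) \<Rightarrow> nat \<Rightarrow> real" where
  "tau t n = t n - t (n - 1)"

text \<open>tmid t k = t_{k-1/2}; tmid t 0 = t_{-1/2} = t_0.\<close>
definition tmid :: "(nat \<Rightarrow> real) \<Rightarrow> nat \<Rightarrow> real" where
  "tmid t k = (if k = 0 then t 0 else t (k - 1) + tau t k / 2)"

text \<open>tauh t k = tau_{k-1/2}.\<close>
definition tauh :: "(nat \<Rightarrow> real) \<Rightarrow> nat \<Rightarrow> real" where
  "tauh t k = (if k = 1 then tau t 1 / 2 else (tau t k + tau t (k - 1)) / 2)"

definition omega :: "real \<Rightarrow> real \<Rightarrow> real" where
  "omega \<gamma> s = (if s > 0 then s powr (\<gamma> - 1) / Gamma \<gamma> else 0)"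

text \<open>acoef t \<alpha> n k = a^{(n)}_{n-k}.\<close>
definition acoef :: "(nat \<Rightarrow> real) \<Rightarrow> real \<Rightarrow> nat \<Rightarrow> nat \<Rightarrow> real" where
  "acoef t \<alpha> n k = (1 / tauh t k) *
     integral {tmid t (k - 1) .. tmid t k} (\<lambda>s. omega (1 - \<alpha>) (tmid t n - s))"

text \<open>pdcc t \<alpha> n m = p^{(n)}_m, defined by recursion on m = n - k:
  p^{(n)}_0 = 1/a^{(n)}_0 and, with k = n - (m+1),
  p^{(n)}_{n-k} = 1/a^{(k)}_0 * sum_{j=k+1}^n (a^{(j)}_{j-k-1} - a^{(j)}_{j-k}) p^{(n)}_{n-j}
  (the sum is reindexed by i = n - j).\<close>
fun pdcc :: "(nat \<Rightarrow> real) \<Rightarrow> real \<Rightarrow> nat \<Rightarrow> nat \<Rightarrow> real" where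
  "pdcc t \<alpha> n 0 = 1 / acoef t \<alpha> n n"
| "pdcc t \<alpha> n (Suc m) =
     (1 / acoef t \<alpha> (n - Suc m) (n - Suc m)) *
     (\<Sum>i\<le>m. (acoef t \<alpha> (n - i) (n - Suc m + 1) - acoef t \<alpha> (n - i) (n - Suc m)) * pdcc t \<alpha> n i)"

text \<open>P t \<alpha> n k = p^{(n)}_{n-k}.\<close>
definition P :: "(nat \<Rightarrow> real) \<Rightarrow> real \<Rightarrow> nat \<Rightarrow> nat \<Rightarrow> real" where
  "P t \<alpha> n k = pdcc t \<alpha> n (n - k)"

end

theory Submission
  imports Defs
begin


definition FF :: "real \<Rightarrow> real \<Rightarrow> real" where
  "FF \<alpha> x = x powr (1 - \<alpha>) / ((1 - \<alpha>) * Gamma (1 - \<alpha>))"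

lemma FF_cont: assumes "\<alpha> < 1" shows "continuous_on {0..} (FF \<alpha>)"
proof -
  have g0: "Gamma (1 - \<alpha>) > 0" by (rule Gamma_real_pos) (use assms in simp)
  have g: "(1 - \<alpha>) * Gamma (1 - \<alpha>) \<noteq> 0" using mult_pos_pos[of "1 - \<alpha>" "Gamma (1 - \<alpha>)"] g0 assms by linarith
  have "continuous_on {0..} (\<lambda>x::real. x powr (1 - \<alpha>))"
    using assms by (intro continuous_on_powr') (auto intro: continuous_intros)
  then show ?thesis unfolding FF_def[abs_def]
    by (rule continuous_on_divide[OF _ continuous_on_const]) (use g in auto)
qed

lemma FF_deriv: assumes "\<alpha> < 1" "x > 0"
  shows "(FF \<alpha> has_real_derivative omega (1 - \<alpha>) x) (at x)"
proof -
  have g: "Gamma (1 - \<alpha>) > 0" using assms by auto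
  have "((\<lambda>x. x powr (1 - \<alpha>) / ((1 - \<alpha>) * Gamma (1 - \<alpha>))) has_real_derivative
        ((1 - \<alpha>) * x powr (1 - \<alpha> - 1)) / ((1 - \<alpha>) * Gamma (1 - \<alpha>))) (at x)"
    by (rule DERIV_cdivide[OF has_real_derivative_powr[OF assms(2)]])
  moreover have "((1 - \<alpha>) * x powr (1 - \<alpha> - 1)) / ((1 - \<alpha>) * Gamma (1 - \<alpha>)) = omega (1 - \<alpha>) x"
    using assms g by (simp add: omega_def)
  ultimately show ?thesis unfolding FF_def[abs_def] by simp
qed

lemma omega_anti: assumes "\<alpha> > 0" "\<alpha> < 1" "0 < x" "x \<le> y"
  shows "omega (1 - \<alpha>) y \<le> omega (1 - \<alpha>) x"
proof -
  have g: "Gamma (1 - \<alpha>) > 0" using assms by auto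
  have "y powr (1 - \<alpha> - 1) \<le> x powr (1 - \<alpha> - 1)"
    by (rule powr_mono2') (use assms in auto)
  then show ?thesis using assms g by (simp add: omega_def divide_right_mono)
qed

lemma FF_mvt: assumes "0 < \<alpha>" "\<alpha> < 1" "0 \<le> a" "a < b"
  shows "\<exists>z. a < z \<and> z < b \<and> FF \<alpha> b - FF \<alpha> a = (b - a) * omega (1 - \<alpha>) z"
proof -
  have c: "continuous_on {a..b} (FF \<alpha>)"
    by (rule continuous_on_subset[OF FF_cont]) (use assms in auto)
  obtain l z where z: "a < z" "z < b" "DERIV (FF \<alpha>) z :> l" "FF \<alpha> b - FF \<alpha> a = (b - a) * l"
    using MVT[OF assms(4) c] FF_deriv assms real_differentiable_def
    by (metis le_less_trans)
  have "l = omega (1 - \<alpha>) z" using DERIV_unique[OF z(3) FF_deriv] z assms by auto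
  then show ?thesis using z by auto
qed

definition SL :: "real \<Rightarrow> real \<Rightarrow> real \<Rightarrow> real" where
  "SL \<alpha> y z = (FF \<alpha> z - FF \<alpha> y) / (z - y)"

lemma SL3: assumes "0 < \<alpha>" "\<alpha> < 1" "0 \<le> y" "y < z" "z < w"
  shows "SL \<alpha> z w \<le> SL \<alpha> y w" "SL \<alpha> y w \<le> SL \<alpha> y z"
proof -
  obtain \<xi>1 where x1: "y < \<xi>1" "\<xi>1 < z" "FF \<alpha> z - FF \<alpha> y = (z - y) * omega (1 - \<alpha>) \<xi>1"
    using FF_mvt[of \<alpha> y z] assms by auto
  obtain \<xi>2 where x2: "z < \<xi>2" "\<xi>2 < w" "FF \<alpha> w - FF \<alpha> z = (w - z) * omega (1 - \<alpha>) \<xi>2"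
    using FF_mvt[of \<alpha> z w] assms by auto
  have le: "omega (1 - \<alpha>) \<xi>2 \<le> omega (1 - \<alpha>) \<xi>1"
    using omega_anti[of \<alpha> \<xi>1 \<xi>2] assms x1 x2 by auto
  have s1: "SL \<alpha> y z = omega (1 - \<alpha>) \<xi>1" using x1 assms by (simp add: SL_def)
  have s2: "SL \<alpha> z w = omega (1 - \<alpha>) \<xi>2" using x2 assms by (simp add: SL_def)
  have s3: "SL \<alpha> y w = ((z - y) * omega (1 - \<alpha>) \<xi>1 + (w - z) * omega (1 - \<alpha>) \<xi>2) / (w - y)"
    using x1 x2 assms unfolding SL_def by (simp add: algebra_simps)
  have wy: "w - y > 0" using assms by auto
  have m1: "(z - y) * omega (1 - \<alpha>) \<xi>2 \<le> (z - y) * omega (1 - \<alpha>) \<xi>1"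
    by (rule mult_left_mono) (use le assms in auto)
  have m2: "(w - z) * omega (1 - \<alpha>) \<xi>2 \<le> (w - z) * omega (1 - \<alpha>) \<xi>1"
    by (rule mult_left_mono) (use le assms in auto)
  have e1: "(w - y) * omega (1 - \<alpha>) \<xi>2 = (z - y) * omega (1 - \<alpha>) \<xi>2 + (w - z) * omega (1 - \<alpha>) \<xi>2"
    by (simp add: algebra_simps)
  have e2: "(w - y) * omega (1 - \<alpha>) \<xi>1 = (z - y) * omega (1 - \<alpha>) \<xi>1 + (w - z) * omega (1 - \<alpha>) \<xi>1"
    by (simp add: algebra_simps)
  have "(w - y) * omega (1 - \<alpha>) \<xi>2 \<le> (z - y) * omega (1 - \<alpha>) \<xi>1 + (w - z) * omega (1 - \<alpha>) \<xi>2"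
    using m1 e1 by linarith
  then show "SL \<alpha> z w \<le> SL \<alpha> y w" using wy by (simp add: s2 s3 pos_le_divide_eq mult.commute)
  have "(z - y) * omega (1 - \<alpha>) \<xi>1 + (w - z) * omega (1 - \<alpha>) \<xi>2 \<le> (w - y) * omega (1 - \<alpha>) \<xi>1"
    using m2 e2 by linarith
  then show "SL \<alpha> y w \<le> SL \<alpha> y z" using wy by (simp add: s1 s3 pos_divide_le_eq mult.commute)
qed

lemma SL_mono: assumes "0 < \<alpha>" "\<alpha> < 1" "0 \<le> y1" "y1 \<le> y2" "z1 \<le> z2" "y1 < z1" "y2 < z2"
  shows "SL \<alpha> y2 z2 \<le> SL \<alpha> y1 z1"
proof -
  have a: "SL \<alpha> y1 z2 \<le> SL \<alpha> y1 z1"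
    using SL3(2)[of \<alpha> y1 z1 z2] assms by (cases "z1 = z2") auto
  have b: "SL \<alpha> y2 z2 \<le> SL \<alpha> y1 z2"
    using SL3(1)[of \<alpha> y1 y2 z2] assms by (cases "y1 = y2") auto
  show ?thesis using a b by linarith
qed

lemma integral_omega: assumes "0 < \<alpha>" "\<alpha> < 1" "c \<le> d" "d \<le> m"
  shows "integral {c..d} (\<lambda>s. omega (1 - \<alpha>) (m - s)) = FF \<alpha> (m - c) - FF \<alpha> (m - d)"
proof -
  have "((\<lambda>s. omega (1 - \<alpha>) (m - s)) has_integral ((\<lambda>s. - FF \<alpha> (m - s)) d - (\<lambda>s. - FF \<alpha> (m - s)) c)) {c..d}"
  proof (rule fundamental_theorem_of_calculus_interior[OF assms(3)])
    show "continuous_on {c..d} (\<lambda>s. - FF \<alpha> (m - s))"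
      using assms
      by (intro continuous_intros continuous_on_compose2[OF FF_cont]) auto
    fix x assume x: "x \<in> {c<..<d}"
    have "((\<lambda>s. - FF \<alpha> (m - s)) has_real_derivative - (omega (1 - \<alpha>) (m - x) * (0 - 1))) (at x)"
      by (intro derivative_intros DERIV_chain2[OF FF_deriv]) (use assms x in auto)
    then show "((\<lambda>s. - FF \<alpha> (m - s)) has_vector_derivative omega (1 - \<alpha>) (m - x)) (at x)"
      by (simp add: has_real_derivative_iff_has_vector_derivative)
  qed
  then show ?thesis by (simp add: integral_unique)
qed



lemma abel_ineq:
  fixes c x :: "nat \<Rightarrow> real"
  assumes "1 \<le> m" "0 \<le> c 1" "\<forall>k. 1 \<le> k \<and> k < m \<longrightarrow> c k \<le> c (Suc k)" "\<forall>k. 0 \<le> x k"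
  shows "- c m * x m \<le> (\<Sum>k=1..m. c k * (x (k-1) - x k))"
  using assms
proof (induction m rule: nat_induct_at_least)
  case base
  then show ?case using mult_nonneg_nonneg[of "c 1" "x 0"] by (simp add: algebra_simps)
next
  case (Suc m)
  have ih: "- c m * x m \<le> (\<Sum>k=1..m. c k * (x (k-1) - x k))" using Suc by auto
  have "0 \<le> (c (Suc m) - c m) * x m" using Suc.prems Suc.hyps by auto
  then show ?case using ih by (simp add: algebra_simps)
qed

lemma per_n:
  fixes c v :: "nat \<Rightarrow> real"
  assumes "1 \<le> n" "0 \<le> c 1" "\<forall>k. 1 \<le> k \<and> k < n \<longrightarrow> c k \<le> c (Suc k)"
  shows "(\<Sum>k=1..n. c k * ((v k)\<^sup>2 - (v (k-1))\<^sup>2)) \<le> 2 * v n * (\<Sum>k=1..n. c k * (v k - v (k-1)))"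
proof -
  define x where "x k = (v n - v k)\<^sup>2" for k
  have "- c n * x n \<le> (\<Sum>k=1..n. c k * (x (k-1) - x k))"
    by (rule abel_ineq) (use assms in \<open>auto simp: x_def\<close>)
  then have "0 \<le> (\<Sum>k=1..n. c k * (x (k-1) - x k))" by (simp add: x_def)
  also have "\<dots> = 2 * v n * (\<Sum>k=1..n. c k * (v k - v (k-1))) - (\<Sum>k=1..n. c k * ((v k)\<^sup>2 - (v (k-1))\<^sup>2))"
    unfolding sum_distrib_left sum_subtractf[symmetric]
    by (rule sum.cong) (auto simp: x_def power2_eq_square algebra_simps)
  finally show ?thesis by simp
qed

lemma form_nonneg:
  fixes a :: "nat \<Rightarrow> nat \<Rightarrow> real" and v :: "nat \<Rightarrow> real"
  assumes v0: "v 0 = 0"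
    and pos: "\<forall>n k. 1 \<le> k \<and> k \<le> n \<and> n \<le> N \<longrightarrow> 0 \<le> a n k"
    and mono: "\<forall>n k. 1 \<le> k \<and> k < n \<and> n \<le> N \<longrightarrow> a n k \<le> a n (Suc k)"
    and shift: "\<forall>n k. 1 \<le> k \<and> k \<le> n \<and> Suc n \<le> N \<longrightarrow> a (Suc n) (Suc k) \<le> a n k"
  shows "0 \<le> (\<Sum>n=1..N. v n * (\<Sum>k=1..n. a n k * (v k - v (k-1))))"
proof -
  define z where "z k = (v k)\<^sup>2" for k
  have z0: "z 0 = 0" using v0 by (simp add: z_def)
  have zpos: "0 \<le> z k" for k by (simp add: z_def)
  have L2: "M \<le> N \<Longrightarrow> (\<Sum>k=1..M. a M k * z k) \<le> (\<Sum>n=1..M. (\<Sum>k=1..n. a n k * (z k - z (k-1))))" for M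
  proof (induction M)
    case 0
    then show ?case by simp
  next
    case (Suc M)
    have ih: "(\<Sum>k=1..M. a M k * z k) \<le> (\<Sum>n=1..M. (\<Sum>k=1..n. a n k * (z k - z (k-1))))"
      using Suc by auto
    have sh: "(\<Sum>k=1..Suc M. a (Suc M) k * z (k-1)) = (\<Sum>k=1..M. a (Suc M) (Suc k) * z k)"
    proof -
      have "(\<Sum>k=1..Suc M. a (Suc M) k * z (k-1)) = (\<Sum>k=0..M. a (Suc M) (Suc k) * z k)"
        using sum.shift_bounds_cl_Suc_ivl[of "\<lambda>k. a (Suc M) k * z (k-1)" 0 M] by simp
      also have "\<dots> = (\<Sum>k=1..M. a (Suc M) (Suc k) * z k)"
        using z0 by (simp add: sum.atLeast_Suc_atMost)
      finally show ?thesis .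
    qed
    have cmp: "(\<Sum>k=1..M. a (Suc M) (Suc k) * z k) \<le> (\<Sum>k=1..M. a M k * z k)"
      by (rule sum_mono) (use shift Suc.prems zpos in \<open>auto intro!: mult_right_mono\<close>)
    have "(\<Sum>k=1..Suc M. a (Suc M) k * (z k - z (k-1)))
        = (\<Sum>k=1..Suc M. a (Suc M) k * z k) - (\<Sum>k=1..Suc M. a (Suc M) k * z (k-1))"
      by (simp add: right_diff_distrib sum_subtractf)
    then show ?case using ih sh cmp by simp
  qed
  have L1: "(\<Sum>n=1..N. (\<Sum>k=1..n. a n k * (z k - z (k-1)))) \<le> (\<Sum>n=1..N. 2 * v n * (\<Sum>k=1..n. a n k * (v k - v (k-1))))"
  proof (rule sum_mono)
    fix n assume n: "n \<in> {1..N}"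
    show "(\<Sum>k=1..n. a n k * (z k - z (k-1))) \<le> 2 * v n * (\<Sum>k=1..n. a n k * (v k - v (k-1)))"
      unfolding z_def by (rule per_n) (use n pos mono in auto)
  qed
  have "0 \<le> (\<Sum>k=1..N. a N k * z k)"
    by (rule sum_nonneg) (use pos zpos in auto)
  also note L2[OF order.refl]
  also note L1
  finally have "0 \<le> 2 * (\<Sum>n=1..N. v n * (\<Sum>k=1..n. a n k * (v k - v (k-1))))"
    by (simp add: sum_distrib_left mult.assoc)
  then show ?thesis by simp
qed



fun usol :: "(nat \<Rightarrow> nat \<Rightarrow> real) \<Rightarrow> (nat \<Rightarrow> real) \<Rightarrow> nat \<Rightarrow> real" where
  "usol a w n = (if n = 0 then 0 else (w n - (\<Sum>k\<in>{1..<n}. a n k * usol a w k)) / a n n)"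

declare usol.simps[simp del]

lemma usol_eq: assumes "1 \<le> n" "a n n \<noteq> 0"
  shows "(\<Sum>k=1..n. a n k * usol a w k) = w n"
proof -
  have "{1..n} = insert n {1..<n}" using assms by auto
  then have "(\<Sum>k=1..n. a n k * usol a w k) = a n n * usol a w n + (\<Sum>k\<in>{1..<n}. a n k * usol a w k)"
    by simp
  also have "a n n * usol a w n = w n - (\<Sum>k\<in>{1..<n}. a n k * usol a w k)"
    using assms by (subst usol.simps) simp
  finally show ?thesis by simp
qed

lemma tri_swap: fixes m :: nat and f :: "nat \<Rightarrow> nat \<Rightarrow> real" shows "(\<Sum>j=1..m. \<Sum>k=1..j. f j k) = (\<Sum>k=1..m. \<Sum>j=k..m. f j k :: real)"
proof (induction m)
  case 0
  then show ?case by simp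
next
  case (Suc m)
  have "(\<Sum>k=1..Suc m. \<Sum>j=k..Suc m. f j k) = (\<Sum>k=1..m. \<Sum>j=k..Suc m. f j k) + f (Suc m) (Suc m)"
    by simp
  also have "(\<Sum>k=1..m. \<Sum>j=k..Suc m. f j k) = (\<Sum>k=1..m. (\<Sum>j=k..m. f j k) + f (Suc m) k)"
    by (rule sum.cong) auto
  finally show ?case using Suc by (simp add: sum.distrib)
qed



lemma omega_pos: assumes "0 < \<alpha>" "\<alpha> < 1" "0 < x" shows "0 < omega (1 - \<alpha>) x"
proof -
  have g0: "Gamma (1 - \<alpha>) > 0" by (rule Gamma_real_pos) (use assms in simp)
  show ?thesis using assms g0 by (simp add: omega_def)
qed

lemma SL_pos: assumes "0 < \<alpha>" "\<alpha> < 1" "0 \<le> y" "y < z" shows "0 < SL \<alpha> y z"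
proof -
  obtain \<xi> where x: "y < \<xi>" "\<xi> < z" "FF \<alpha> z - FF \<alpha> y = (z - y) * omega (1 - \<alpha>) \<xi>"
    using FF_mvt[of \<alpha> y z] assms by auto
  then have "SL \<alpha> y z = omega (1 - \<alpha>) \<xi>" using assms by (simp add: SL_def)
  then show ?thesis using omega_pos[of \<alpha> \<xi>] assms x by auto
qed

theorem lemma2p5:
  fixes t :: "nat \<Rightarrow> real" and T \<alpha> :: real and N n :: nat and w :: "nat \<Rightarrow> real"
  assumes "0 < T" and "0 < \<alpha>" and "\<alpha> < 1"
    and "t 0 = 0" and "t N = T"
    and "\<forall>i\<in>{1..N}. t (i - 1) < t i"
    and "\<forall>i\<in>{2..N}. tau t (i - 1) \<le> tau t i"
    and "1 \<le> n" and "n \<le> N"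
  shows "(\<Sum>k = 1..n. w k * (\<Sum>j = 1..k. P t \<alpha> k j * w j)) \<ge> 0"
proof -
  note al = assms(2,3)
  define s where "s = tmid t"
  define h where "h = tauh t"
  define a where "a = acoef t \<alpha>"
  have taupos: "0 < tau t k" if "1 \<le> k" "k \<le> N" for k
    using assms(6) that by (auto simp: tau_def)
  have taumono: "tau t (k - 1) \<le> tau t k" if "2 \<le> k" "k \<le> N" for k
    using assms(7) that by auto
  have hpos: "0 < h k" if "1 \<le> k" "k \<le> N" for k
  proof (cases "k = 1")
    case True then show ?thesis using taupos[of 1] that by (simp add: h_def tauh_def)
  next
    case False
    have "0 < tau t (k-1)" using taupos[of "k-1"] that False by auto
    then show ?thesis using taupos[of k] that False by (simp add: h_def tauh_def)
  qed
  have sdiff: "s k - s (k - 1) = h k" if "1 \<le> k" "k \<le> N" for k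
  proof (cases "k = 1")
    case True then show ?thesis by (simp add: h_def tauh_def s_def tmid_def)
  next
    case False
    then have "k - 1 \<noteq> 0" "k - 1 - 1 = k - 2" using that by auto
    then have e1: "s k = t (k-1) + (t k - t (k-1)) / 2" "s (k-1) = t (k-2) + (t (k-1) - t (k-2)) / 2"
      "h k = ((t k - t (k-1)) + (t (k-1) - t (k-2))) / 2"
      using False that by (simp_all add: h_def tauh_def s_def tmid_def tau_def)
    then show ?thesis by (simp add: field_simps)
  qed
  have hstep: "h k \<le> h (Suc k)" if "1 \<le> k" "Suc k \<le> N" for k
  proof (cases "k = 1")
    case True then show ?thesis using taupos[of "Suc (Suc 0)"] that by (simp add: h_def tauh_def)
  next
    case False
    have "tau t (k - 1) \<le> tau t k" using taumono[of k] that False by auto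
    moreover have "tau t k \<le> tau t (Suc k)" using taumono[of "Suc k"] that by auto
    ultimately show ?thesis using False that by (simp add: h_def tauh_def)
  qed
  have hmono: "h j \<le> h k" if "1 \<le> j" "j \<le> k" "k \<le> N" for j k
    using that(2)
  proof (induction k rule: dec_induct)
    case base then show ?case by simp
  next
    case (step k) then show ?case using hstep[of k] that by auto
  qed
  have smono: "s j \<le> s k" if "j \<le> k" "k \<le> N" for j k
    using that(1)
  proof (induction k rule: dec_induct)
    case base then show ?case by simp
  next
    case (step k) then show ?case using sdiff[of "Suc k"] hpos[of "Suc k"] that by auto
  qed
  have aform: "a m k = SL \<alpha> (s m - s k) (s m - s (k - 1))" if "1 \<le> k" "k \<le> m" "m \<le> N" for m k
  proof -
    have "integral {s (k - 1)..s k} (\<lambda>x. omega (1 - \<alpha>) (s m - x)) = FF \<alpha> (s m - s (k - 1)) - FF \<alpha> (s m - s k)"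
      by (rule integral_omega) (use al smono[of "k-1" k] smono[of k m] that in auto)
    moreover have "(s m - s (k - 1)) - (s m - s k) = h k" using sdiff[of k] that by auto
    ultimately show ?thesis unfolding a_def acoef_def SL_def
      by (simp add: s_def h_def)
  qed
  have apos: "0 < a m k" if "1 \<le> k" "k \<le> m" "m \<le> N" for m k
    unfolding aform[OF that]
    by (rule SL_pos) (use al smono[of k m] sdiff[of k] hpos[of k] that in auto)
  have amono: "a m k \<le> a m (Suc k)" if "1 \<le> k" "k < m" "m \<le> N" for m k
  proof -
    have "SL \<alpha> (s m - s k) (s m - s (k - 1)) \<le> SL \<alpha> (s m - s (Suc k)) (s m - s k)"
      by (rule SL_mono) (use al smono[of "Suc k" m] sdiff[of k] hpos[of k] sdiff[of "Suc k"] hpos[of "Suc k"] that in auto)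
    then show ?thesis using aform[of k m] aform[of "Suc k" m] that by auto
  qed
  have ashift: "a (Suc m) (Suc k) \<le> a m k" if "1 \<le> k" "k \<le> m" "Suc m \<le> N" for m k
  proof -
    have h1: "h (Suc k) \<le> h (Suc m)" using hmono[of "Suc k" "Suc m"] that by auto
    have h2: "h k \<le> h (Suc m)" using hmono[of k "Suc m"] that by auto
    have "SL \<alpha> (s (Suc m) - s (Suc k)) (s (Suc m) - s k) \<le> SL \<alpha> (s m - s k) (s m - s (k - 1))"
      by (rule SL_mono) (use al h1 h2 smono[of k m] sdiff[of k] hpos[of k] sdiff[of "Suc k"] hpos[of "Suc k"]
            sdiff[of "Suc m"] that in auto)
    then show ?thesis using aform[of k m] aform[of "Suc k" "Suc m"] that by auto
  qed
  have Prec: "P t \<alpha> m k * a k k = (\<Sum>j=Suc k..m. (a j (Suc k) - a j k) * P t \<alpha> m j)"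
    if "1 \<le> k" "k < m" "m \<le> N" for m k
  proof -
    define d where "d = m - k - 1"
    have d: "m - k = Suc d" using that by (simp add: d_def)
    have mk: "m - Suc d = k" using d that by auto
    have "P t \<alpha> m k = (1 / a k k) * (\<Sum>i\<le>d. (a (m - i) (Suc k) - a (m - i) k) * pdcc t \<alpha> m i)"
      unfolding P_def d by (simp add: mk a_def)
    moreover have "(\<Sum>i\<le>d. (a (m - i) (Suc k) - a (m - i) k) * pdcc t \<alpha> m i)
        = (\<Sum>j=Suc k..m. (a j (Suc k) - a j k) * P t \<alpha> m j)"
      by (rule sum.reindex_bij_witness[of _ "\<lambda>j. m - j" "\<lambda>i. m - i"])
         (use d in \<open>auto simp del: pdcc.simps simp: P_def\<close>)
    moreover have "a k k \<noteq> 0" using apos[of k k] that by auto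
    ultimately show ?thesis by simp
  qed
  have Pid: "(\<Sum>j=k..m. P t \<alpha> m j * a j k) = 1" if "1 \<le> k" "k \<le> m" "m \<le> N" for m k
  proof -
    have "\<forall>k. m - k = d \<and> 1 \<le> k \<and> k \<le> m \<longrightarrow> (\<Sum>j=k..m. P t \<alpha> m j * a j k) = 1" for d
    proof (induction d)
      case 0
      show ?case
      proof (intro allI impI)
        fix k assume k: "m - k = 0 \<and> 1 \<le> k \<and> k \<le> m"
        then have "k = m" by auto
        moreover have "a m m \<noteq> 0" using apos[of m m] k that by auto
        ultimately show "(\<Sum>j=k..m. P t \<alpha> m j * a j k) = 1" by (simp add: P_def a_def)
      qed
    next
      case (Suc d)
      show ?case
      proof (intro allI impI)
        fix k assume k: "m - k = Suc d \<and> 1 \<le> k \<and> k \<le> m"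
        have ih: "(\<Sum>j=Suc k..m. P t \<alpha> m j * a j (Suc k)) = 1"
        proof -
          have "m - Suc k = d \<and> 1 \<le> Suc k \<and> Suc k \<le> m" using k by arith
          then show ?thesis using Suc.IH by blast
        qed
        have "(\<Sum>j=k..m. P t \<alpha> m j * a j k) = P t \<alpha> m k * a k k + (\<Sum>j=Suc k..m. P t \<alpha> m j * a j k)"
          using k by (simp add: sum.atLeast_Suc_atMost)
        also have "\<dots> = (\<Sum>j=Suc k..m. (a j (Suc k) - a j k) * P t \<alpha> m j) + (\<Sum>j=Suc k..m. P t \<alpha> m j * a j k)"
          using Prec[of k m] k that by auto
        also have "\<dots> = (\<Sum>j=Suc k..m. P t \<alpha> m j * a j (Suc k))"
          by (simp add: sum.distrib[symmetric] algebra_simps)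
        finally show "(\<Sum>j=k..m. P t \<alpha> m j * a j k) = 1" using ih by simp
      qed
    qed
    then show ?thesis using that by auto
  qed
  define u where "u = usol a w"
  define v where "v m = (\<Sum>k=1..m. u k)" for m
  have v0: "v 0 = 0" by (simp add: v_def)
  have wu: "w m = (\<Sum>k=1..m. a m k * u k)" if "1 \<le> m" "m \<le> N" for m
    using usol_eq[of m a w] apos[of m m] that by (simp add: u_def)
  have uv: "u k = v k - v (k - 1)" if "1 \<le> k" for k
  proof (cases k)
    case 0 then show ?thesis using that by simp
  next
    case (Suc j) then show ?thesis by (simp add: v_def)
  qed
  have inner: "(\<Sum>j=1..m. P t \<alpha> m j * w j) = v m" if "1 \<le> m" "m \<le> N" for m
  proof -
    have "(\<Sum>j=1..m. P t \<alpha> m j * w j) = (\<Sum>j=1..m. \<Sum>k=1..j. P t \<alpha> m j * a j k * u k)"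
      by (rule sum.cong) (use wu that in \<open>auto simp: sum_distrib_left mult.assoc\<close>)
    also have "\<dots> = (\<Sum>k=1..m. \<Sum>j=k..m. P t \<alpha> m j * a j k * u k)"
      by (rule tri_swap)
    also have "\<dots> = (\<Sum>k=1..m. (\<Sum>j=k..m. P t \<alpha> m j * a j k) * u k)"
      by (simp add: sum_distrib_right)
    also have "\<dots> = (\<Sum>k=1..m. u k)"
      by (rule sum.cong) (use Pid that in auto)
    finally show ?thesis by (simp add: v_def)
  qed
  have "(\<Sum>k = 1..n. w k * (\<Sum>j = 1..k. P t \<alpha> k j * w j))
      = (\<Sum>m=1..n. v m * (\<Sum>k=1..m. a m k * (v k - v (k-1))))"
  proof (rule sum.cong)
    fix m assume m: "m \<in> {1..n}"
    have "w m = (\<Sum>k=1..m. a m k * (v k - v (k-1)))"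
      unfolding wu[of m] using m assms(9) by (auto intro!: sum.cong simp: uv wu)
    then show "w m * (\<Sum>j = 1..m. P t \<alpha> m j * w j) = v m * (\<Sum>k=1..m. a m k * (v k - v (k-1)))"
      using inner[of m] m assms(9) by auto
  qed simp
  also have "0 \<le> \<dots>"
  proof (rule form_nonneg[of v n a, OF v0]; intro allI impI)
    fix m k assume "1 \<le> k \<and> k \<le> m \<and> m \<le> n"
    then show "0 \<le> a m k" using apos[of k m] assms(9) by auto
  next
    fix m k assume "1 \<le> k \<and> k < m \<and> m \<le> n"
    then show "a m k \<le> a m (Suc k)" using amono[of k m] assms(9) by auto
  next
    fix m k assume "1 \<le> k \<and> k \<le> m \<and> Suc m \<le> n"
    then show "a (Suc m) (Suc k) \<le> a m k" using ashift[of k m] assms(9) by auto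
  qed
  finally show ?thesis by simp
qed


end
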